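(* Let $P^0\in L\cap\Delta^{n-1}_+$ satisfy $\bigl(P^0+\mathbf{Q}(P^0,P^* )\bigr)\cap L=\{P^0\}$. Then there exists a strictly convex function $h$ on $(0,\infty)$ such that $P^0$ minimizes the $f$-divergence $H_h(P\|P^* )=\sum_i p^*_i\,h(p_i/p^*_i)$ over $L\cap\Delta^{n-1}_+$. Conversely, if $P^0\in L\cap\Delta^{n-1}_+$ is a minimizer over $L\cap\Delta^{n-1}_+$ of $H_h(\cdot\|P^* )$ for some strictly convex differentiable $h$ on $(0,\infty)$, then $\bigl(P^0+\mathbf{Q}(P^0,P^* )\bigr)\cap L=\{P^0\}$.
   Context: Fix $n\ge 2$ and a positive equilibrium distribution $P^*=(p^*_i)$, $p^*_i>0$, $\sum_i p^*_i=1$. Let $\Delta^{n-1}_+=\{P\in\mathbb{R}^n: p_i>0,\ \sum_i p_i=1\}$. For $i\neq j$ let $\gamma^{ji}\in\mathbb{R}^n$ be the vector with $\gamma^{ji}_j=-1$, $\gamma^{ji}_i=1$, other coordinates $0$; ${\rm cone}$ denotes the set of non-negative linear combinations; ${\rm sign}$ is the three-valued sign function; $$\mathbf{Q}(P,P^* )={\rm cone}\Bigl\{\gamma^{ji}\,{\rm sign}\Bigl(\tfrac{p_j}{p^*_j}-\tfrac{p_i}{p^*_i}\Bigr)\ :\ 1\le j<i\le n\Bigr\}.$$ The condition manifold is $L=\{P\in\mathbb{R}^n:\ \sum_j m_{rj}p_j=M_r,\ r=0,\dots,k\}$ for a real $(k+1)\times n$ matrix $(m_{rj})$ with $m_{0j}=1$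 for all $j$, $M_0=1$; assume $L\cap\Delta^{n-1}_+\neq\emptyset$. *)

theory Defs
  imports "HOL-Analysis.Analysis"
begin

text \<open>Vectors in R^n are represented as functions nat => real, with coordinates
  indexed by 0..n-1 (the paper's 1..n shifted by one).\<close>

definition strict_convex_on :: "real set \<Rightarrow> (real \<Rightarrow> real) \<Rightarrow> bool" where
  "strict_convex_on S f \<longleftrightarrow> convex S \<and>
     (\<forall>x\<in>S. \<forall>y\<in>S. \<forall>t. x \<noteq> y \<and> 0 < t \<and> t < 1 \<longrightarrow>
        f ((1 - t) * x + t * y) < (1 - t) * f x + t * f y)"

definition pos_simplex :: "nat \<Rightarrow> (nat \<Rightarrow> real) set" where
  "pos_simplex n = {P. (\<forall>i<n. P i > 0) \<and> (\<forall>i\<ge>n. P i = 0) \<and> (\<Sum>i<n. P i) = 1}"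

definition cond_manifold :: "nat \<Rightarrow> nat \<Rightarrow> (nat \<Rightarrow> nat \<Rightarrow> real) \<Rightarrow> (nat \<Rightarrow> real) \<Rightarrow> (nat \<Rightarrow> real) set" where
  "cond_manifold n k m M = {P. (\<forall>i\<ge>n. P i = 0) \<and> (\<forall>r\<le>k. (\<Sum>j<n. m r j * P j) = M r)}"

definition gamma :: "nat \<Rightarrow> nat \<Rightarrow> nat \<Rightarrow> real" where
  "gamma j i = (\<lambda>l. if l = j then -1 else if l = i then 1 else 0)"

definition Q_gens :: "nat \<Rightarrow> (nat \<Rightarrow> real) \<Rightarrow> (nat \<Rightarrow> real) \<Rightarrow> (nat \<Rightarrow> real) set" where
  "Q_gens n P Pstar = {(\<lambda>l. sgn (P j / Pstar j - P i / Pstar i) * gamma j i l) | j i. j < i \<and> i < n}"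

definition nonneg_cone :: "(nat \<Rightarrow> real) set \<Rightarrow> (nat \<Rightarrow> real) set" where
  "nonneg_cone S = {x. \<exists>F c. finite F \<and> F \<subseteq> S \<and> (\<forall>v\<in>F. c v \<ge> 0) \<and>
                        x = (\<lambda>l. \<Sum>v\<in>F. c v * v l)}"

definition Qcone :: "nat \<Rightarrow> (nat \<Rightarrow> real) \<Rightarrow> (nat \<Rightarrow> real) \<Rightarrow> (nat \<Rightarrow> real) set" where
  "Qcone n P Pstar = nonneg_cone (Q_gens n P Pstar)"

definition fdiv :: "nat \<Rightarrow> (real \<Rightarrow> real) \<Rightarrow> (nat \<Rightarrow> real) \<Rightarrow> (nat \<Rightarrow> real) \<Rightarrow> real" where
  "fdiv n h P Pstar = (\<Sum>i<n. Pstar i * h (P i / Pstar i))"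

end

theory Submission
  imports Defs
begin

lemma gordan:
  fixes A :: "(nat \<Rightarrow> real) set"
  assumes "finite A"
  shows "(\<exists>y. \<forall>a\<in>A. (\<Sum>r<d. a r * y r) < 0) \<or>
         (\<exists>c. (\<forall>a\<in>A. 0 \<le> c a) \<and> (\<Sum>a\<in>A. c a) = 1 \<and> (\<forall>r<d. (\<Sum>a\<in>A. c a * a r) = 0))"
  using assms
proof (induction d arbitrary: A)
  case 0
  show ?case
  proof (cases "A = {}")
    case True then show ?thesis by auto
  next
    case False
    then obtain a0 where a0: "a0 \<in> A" by auto
    have "(\<Sum>a\<in>A. (if a = a0 then 1 else 0::real)) = 1" using a0 0 by (simp add: sum.delta)
    then show ?thesis by (intro disjI2 exI[of _ "\<lambda>a. if a = a0 then 1 else 0"]) auto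
  qed
next
  case (Suc d)
  define Pos where "Pos = {a\<in>A. a d > 0}"
  define Neg where "Neg = {a\<in>A. a d < 0}"
  define Zer where "Zer = {a\<in>A. a d = 0}"
  define comb where "comb = (\<lambda>(p::nat\<Rightarrow>real) (q::nat\<Rightarrow>real). (\<lambda>r. (- q d) * p r + p d * q r))"
  define B where "B = Zer \<union> (\<lambda>pq. comb (fst pq) (snd pq)) ` (Pos \<times> Neg)"
  have finB: "finite B" unfolding B_def Zer_def Pos_def Neg_def using Suc.prems by auto
  have Bd: "\<forall>b\<in>B. b d = 0" unfolding B_def Zer_def comb_def by auto
  from Suc.IH[OF finB] show ?case
  proof
    assume "\<exists>y. \<forall>b\<in>B. (\<Sum>r<d. b r * y r) < 0"
    then obtain y' where y': "\<forall>b\<in>B. (\<Sum>r<d. b r * y' r) < 0" by blast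
    define Sv where "Sv a = (\<Sum>r<d. a r * y' r)" for a :: "nat \<Rightarrow> real"
    have combS: "- q d * Sv p + p d * Sv q < 0" if "p \<in> Pos" "q \<in> Neg" for p q
    proof -
      have "comb p q \<in> B" unfolding B_def using that by force
      then have "(\<Sum>r<d. comb p q r * y' r) < 0" using y' by blast
      moreover have "(\<Sum>r<d. comb p q r * y' r) = - q d * Sv p + p d * Sv q"
      proof -
        have "(\<Sum>r<d. comb p q r * y' r) = (\<Sum>r<d. (- q d) * (p r * y' r) + p d * (q r * y' r))"
          unfolding comb_def by (intro sum.cong) (auto simp: algebra_simps)
        also have "\<dots> = - q d * Sv p + p d * Sv q"
          unfolding Sv_def by (simp add: sum.distrib sum_distrib_left sum_subtractf sum_negf)
        finally show ?thesis .
      qed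
      ultimately show ?thesis by simp
    qed
    define U where "U = (\<lambda>p. - Sv p / p d) ` Pos"
    define Lw where "Lw = (\<lambda>q. - Sv q / q d) ` Neg"
    have finU: "finite U" and finL: "finite Lw" unfolding U_def Lw_def Pos_def Neg_def using Suc.prems by auto
    have LU: "l < u" if lu: "l \<in> Lw" "u \<in> U" for l u
    proof -
      obtain p where p: "p \<in> Pos" "u = - Sv p / p d" using lu U_def by auto
      obtain q where q: "q \<in> Neg" "l = - Sv q / q d" using lu Lw_def by auto
      have pd: "p d > 0" using p Pos_def by auto
      have qd: "q d < 0" using q Neg_def by auto
      have c: "- q d * Sv p + p d * Sv q < 0" using combS p q by blast
      have "- Sv q / q d < - Sv p / p d"
        using pd qd c by (simp add: field_simps)
      then show ?thesis using p q by simp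
    qed
    define t where "t = (if Lw = {} then (if U = {} then 0 else Min U - 1)
                         else if U = {} then Max Lw + 1 else (Max Lw + Min U) / 2)"
    have tU: "t < u" if uu: "u \<in> U" for u
    proof -
      have m: "Min U \<le> u" using uu finU by simp
      have Une: "U \<noteq> {}" using uu by auto
      show ?thesis
      proof (cases "Lw = {}")
        case True then have "t = Min U - 1" unfolding t_def using Une by simp
        then show ?thesis using m by linarith
      next
        case False
        have mm: "Max Lw < Min U" using LU[OF Max_in[OF finL False] Min_in[OF finU Une]] .
        have "t = (Max Lw + Min U) / 2" unfolding t_def using Une False by simp
        moreover have "(Max Lw + Min U) / 2 < Min U" using mm by simp
        ultimately show ?thesis using m by linarith
      qed
    qed
    have tL: "l < t" if ll: "l \<in> Lw" for l
    proof -
      have m: "l \<le> Max Lw" using ll finL by simp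
      have Lne: "Lw \<noteq> {}" using ll by auto
      show ?thesis
      proof (cases "U = {}")
        case True then have "t = Max Lw + 1" unfolding t_def using Lne by simp
        then show ?thesis using m by linarith
      next
        case False
        have mm: "Max Lw < Min U" using LU[OF Max_in[OF finL Lne] Min_in[OF finU False]] .
        have "t = (Max Lw + Min U) / 2" unfolding t_def using Lne False by simp
        moreover have "Max Lw < (Max Lw + Min U) / 2" using mm by simp
        ultimately show ?thesis using m by linarith
      qed
    qed
    define y where "y = y'(d := t)"
    have ysum: "(\<Sum>r<Suc d. a r * y r) = Sv a + a d * t" for a
    proof -
      have "(\<Sum>r<Suc d. a r * y r) = (\<Sum>r<d. a r * y r) + a d * y d" by simp
      also have "(\<Sum>r<d. a r * y r) = Sv a" unfolding Sv_def y_def by (intro sum.cong) auto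
      finally show ?thesis unfolding y_def by simp
    qed
    have "\<forall>a\<in>A. (\<Sum>r<Suc d. a r * y r) < 0"
    proof
      fix a assume a: "a \<in> A"
      consider "a d > 0" | "a d < 0" | "a d = 0" by linarith
      then show "(\<Sum>r<Suc d. a r * y r) < 0"
      proof cases
        case 1
        then have "a \<in> Pos" using a Pos_def by auto
        then have "t < - Sv a / a d" using tU U_def by auto
        then have "t * a d < - Sv a" using 1 by (simp add: field_simps)
        then show ?thesis using ysum by (simp add: algebra_simps)
      next
        case 2
        then have "a \<in> Neg" using a Neg_def by auto
        then have "- Sv a / a d < t" using tL Lw_def by auto
        then have "t * a d < - Sv a" using 2 by (simp add: field_simps)
        then show ?thesis using ysum by (simp add: algebra_simps)
      next
        case 3
        then have "a \<in> B" using a unfolding B_def Zer_def by auto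
        then have "Sv a < 0" using y' Sv_def by simp
        moreover have "a d * t = 0" using 3 by simp
        ultimately show ?thesis using ysum[of a] by linarith
      qed
    qed
    then show ?thesis by blast
  next
    assume "\<exists>c. (\<forall>a\<in>B. 0 \<le> c a) \<and> (\<Sum>a\<in>B. c a) = 1 \<and> (\<forall>r<d. (\<Sum>a\<in>B. c a * a r) = 0)"
    then obtain c where c0: "\<forall>b\<in>B. 0 \<le> c b" and c1: "(\<Sum>b\<in>B. c b) = 1"
      and cz: "\<forall>r<d. (\<Sum>b\<in>B. c b * b r) = 0" by blast
    define rep where "rep b = (SOME pq. pq \<in> Pos \<times> Neg \<and> b = comb (fst pq) (snd pq))" for b
    define w where "w b a = (if b \<in> Zer then (if a = b then 1 else 0)
        else (if a = fst (rep b) then - snd (rep b) d else if a = snd (rep b) then fst (rep b) d else 0))"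
      for b a :: "nat \<Rightarrow> real"
    have wprop: "(\<forall>a\<in>A. 0 \<le> w b a) \<and> (\<Sum>a\<in>A. w b a) > 0 \<and> (\<forall>r. (\<Sum>a\<in>A. w b a * a r) = b r)"
      if b: "b \<in> B" for b
    proof (cases "b \<in> Zer")
      case True
      then have bA: "b \<in> A" using Zer_def by auto
      have wb: "w b = (\<lambda>a. if a = b then 1 else 0)" unfolding w_def using True by auto
      have s1: "(\<Sum>a\<in>A. w b a) = 1" unfolding wb using bA Suc.prems by simp
      have s2: "(\<Sum>a\<in>A. w b a * a r) = b r" for r
      proof -
        have "(\<Sum>a\<in>A. w b a * a r) = (\<Sum>a\<in>A. if a = b then b r else 0)"
          unfolding wb by (intro sum.cong) auto
        also have "\<dots> = b r" using bA Suc.prems by simp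
        finally show ?thesis .
      qed
      show ?thesis using s1 s2 unfolding wb by auto
    next
      case False
      then have "\<exists>pq. pq \<in> Pos \<times> Neg \<and> b = comb (fst pq) (snd pq)" using b False unfolding B_def by blast
      then have r: "rep b \<in> Pos \<times> Neg \<and> b = comb (fst (rep b)) (snd (rep b))"
        unfolding rep_def by (rule someI_ex)
      define p where "p = fst (rep b)"
      define q where "q = snd (rep b)"
      have p: "p \<in> A" "p d > 0" and q: "q \<in> A" "q d < 0" using r p_def q_def Pos_def Neg_def by auto
      have pq: "p \<noteq> q" using p q by auto
      have wb: "w b = (\<lambda>a. if a = p then - q d else if a = q then p d else 0)"
        unfolding w_def p_def q_def using False by auto
      have s1: "(\<Sum>a\<in>A. w b a) = - q d + p d"
      proof -
        have "(\<Sum>a\<in>A. w b a) = (\<Sum>a\<in>A. (if a = p then - q d else 0) + (if a = q then p d else 0))"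
          unfolding wb using pq by (intro sum.cong) auto
        also have "\<dots> = - q d + p d" using p q Suc.prems by (simp add: sum.distrib sum.delta)
        finally show ?thesis .
      qed
      have s2: "(\<Sum>a\<in>A. w b a * a r) = b r" for r
      proof -
        have "(\<Sum>a\<in>A. w b a * a r) = (\<Sum>a\<in>A. (if a = p then - q d * p r else 0) + (if a = q then p d * q r else 0))"
          unfolding wb using pq by (intro sum.cong) auto
        also have "\<dots> = - q d * p r + p d * q r" using p q Suc.prems by (simp add: sum.distrib sum.delta)
        also have "\<dots> = comb p q r" unfolding comb_def by simp
        also have "comb p q = b" using r p_def q_def by simp
        finally show ?thesis .
      qed
      show ?thesis using s1 s2 p q unfolding wb by auto
    qed
    define T where "T = (\<Sum>b\<in>B. c b * (\<Sum>a\<in>A. w b a))"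
    have T0: "T > 0"
    proof -
      obtain b0 where b0: "b0 \<in> B" "c b0 > 0"
      proof (rule ccontr)
        assume "\<not> thesis"
        then have "\<forall>b\<in>B. c b \<le> 0" using that by force
        then have "(\<Sum>b\<in>B. c b) \<le> 0" by (simp add: sum_nonpos)
        then show False using c1 by simp
      qed
      show ?thesis unfolding T_def
      proof (rule sum_pos2[OF finB b0(1)])
        show "0 < c b0 * sum (w b0) A" using b0 wprop by simp
        show "\<And>i. i \<in> B \<Longrightarrow> 0 \<le> c i * sum (w i) A" using c0 wprop
          by (meson less_imp_le mult_nonneg_nonneg)
      qed
    qed
    define cA where "cA a = (\<Sum>b\<in>B. c b * w b a) / T" for a
    have "\<forall>a\<in>A. 0 \<le> cA a" unfolding cA_def using T0 c0 wprop
      by (auto intro!: divide_nonneg_pos sum_nonneg mult_nonneg_nonneg)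
    moreover have "(\<Sum>a\<in>A. cA a) = 1"
    proof -
      have "(\<Sum>a\<in>A. cA a) = (\<Sum>a\<in>A. \<Sum>b\<in>B. c b * w b a) / T"
        unfolding cA_def by (simp add: sum_divide_distrib)
      also have "(\<Sum>a\<in>A. \<Sum>b\<in>B. c b * w b a) = T"
        unfolding T_def by (subst sum.swap) (simp add: sum_distrib_left)
      finally show ?thesis using T0 by simp
    qed
    moreover have "\<forall>r<Suc d. (\<Sum>a\<in>A. cA a * a r) = 0"
    proof (intro allI impI)
      fix r assume r: "r < Suc d"
      have "(\<Sum>a\<in>A. cA a * a r) = (\<Sum>a\<in>A. \<Sum>b\<in>B. c b * (w b a * a r)) / T"
        unfolding cA_def by (simp add: sum_divide_distrib sum_distrib_right mult.assoc)
      also have "(\<Sum>a\<in>A. \<Sum>b\<in>B. c b * (w b a * a r)) = (\<Sum>b\<in>B. c b * b r)"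
        by (subst sum.swap) (simp add: sum_distrib_left[symmetric] wprop)
      also have "(\<Sum>b\<in>B. c b * b r) = 0"
      proof (cases "r < d")
        case True then show ?thesis using cz by simp
      next
        case False then have "r = d" using r by simp
        then show ?thesis using Bd by (simp add: sum.neutral)
      qed
      finally show "(\<Sum>a\<in>A. cA a * a r) = 0" by simp
    qed
    ultimately show ?thesis by blast
  qed
qed


definition cvx :: "(real \<Rightarrow> real) \<Rightarrow> bool" where
  "cvx f \<longleftrightarrow> (\<forall>a b t. 0 \<le> t \<and> t \<le> 1 \<longrightarrow> f ((1 - t) * a + t * b) \<le> (1 - t) * f a + t * f b)"

lemma cvx_affine: "cvx (\<lambda>y. c + s * (y - z))"
  unfolding cvx_def by (auto simp: algebra_simps)

lemma cvx_max: assumes "cvx f" "cvx g" shows "cvx (\<lambda>y. max (f y) (g y))"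
  unfolding cvx_def
proof (intro allI impI)
  fix a b t :: real assume t: "0 \<le> t \<and> t \<le> 1"
  have "f ((1 - t) * a + t * b) \<le> (1 - t) * f a + t * f b" using assms(1) t unfolding cvx_def by blast
  also have "\<dots> \<le> (1 - t) * max (f a) (g a) + t * max (f b) (g b)"
    using t by (intro add_mono mult_left_mono) auto
  finally have 1: "f ((1 - t) * a + t * b) \<le> (1 - t) * max (f a) (g a) + t * max (f b) (g b)" .
  have "g ((1 - t) * a + t * b) \<le> (1 - t) * g a + t * g b" using assms(2) t unfolding cvx_def by blast
  also have "\<dots> \<le> (1 - t) * max (f a) (g a) + t * max (f b) (g b)"
    using t by (intro add_mono mult_left_mono) auto
  finally have 2: "g ((1 - t) * a + t * b) \<le> (1 - t) * max (f a) (g a) + t * max (f b) (g b)" .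
  show "max (f ((1 - t) * a + t * b)) (g ((1 - t) * a + t * b)) \<le> (1 - t) * max (f a) (g a) + t * max (f b) (g b)"
    using 1 2 by simp
qed

lemma top_exists:
  fixes x g :: "nat \<Rightarrow> real"
  assumes "finite A" "A \<noteq> {}" and mono: "\<forall>i\<in>A. \<forall>j\<in>A. x i < x j \<longrightarrow> g i \<le> g j"
  shows "\<exists>k\<in>A. \<forall>i\<in>A. x i \<le> x k \<and> g i \<le> g k"
proof -
  define X where "X = Max (x ` A)"
  have XA: "X \<in> x ` A" unfolding X_def using assms by simp
  define T where "T = {i\<in>A. x i = X}"
  have finT: "finite T" "T \<noteq> {}" unfolding T_def using assms XA by auto
  define G where "G = Max (g ` T)"
  have "G \<in> g ` T" unfolding G_def using finT by simp
  then obtain k where k: "k \<in> T" "g k = G" by auto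
  have "\<forall>i\<in>A. x i \<le> x k \<and> g i \<le> g k"
  proof
    fix i assume i: "i \<in> A"
    have xk: "x k = X" "k \<in> A" using k T_def by auto
    have xi: "x i \<le> X" unfolding X_def using assms i by simp
    show "x i \<le> x k \<and> g i \<le> g k"
    proof (cases "x i < x k")
      case True then show ?thesis using mono i xk by auto
    next
      case False
      then have "i \<in> T" using xi xk i T_def by auto
      then have "g i \<le> G" unfolding G_def using finT by simp
      then show ?thesis using k xk xi by auto
    qed
  qed
  then show ?thesis using k T_def by auto
qed

lemma interp_strong:
  fixes x g :: "nat \<Rightarrow> real"
  assumes fin: "finite S" and mono: "\<forall>i\<in>S. \<forall>j\<in>S. x i < x j \<longrightarrow> g i \<le> g j"
  shows "\<exists>\<psi>. cvx \<psi> \<and> (\<forall>i\<in>S. \<forall>y. \<psi> y \<ge> \<psi> (x i) + g i * (y - x i)) \<and>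
     (\<forall>k\<in>S. (\<forall>i\<in>S. x i \<le> x k \<and> g i \<le> g k) \<longrightarrow> (\<forall>y \<ge> x k. \<psi> y \<le> \<psi> (x k) + g k * (y - x k)))"
  using fin
proof (induction S rule: finite_remove_induct)
  case empty
  show ?case by (intro exI[of _ "\<lambda>y. 0"]) (auto simp: cvx_def)
next
  case (remove A)
  have monoA: "\<forall>i\<in>A. \<forall>j\<in>A. x i < x j \<longrightarrow> g i \<le> g j" using mono remove.hyps(3) by blast
  obtain k where k: "k \<in> A" "\<forall>i\<in>A. x i \<le> x k \<and> g i \<le> g k"
    using top_exists[OF remove.hyps(1,2) monoA] by blast
  have tops: "x k2 = x k \<and> g k2 = g k" if "k2 \<in> A" "\<forall>i\<in>A. x i \<le> x k2 \<and> g i \<le> g k2" for k2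
    using that k by force
  show ?case
  proof (cases "A - {k} = {}")
    case True
    then have Ak: "A = {k}" using k by auto
    show ?thesis
      by (intro exI[of _ "\<lambda>y. 0 + g k * (y - x k)"]) (use cvx_affine[of 0 "g k" "x k"] in \<open>auto simp: Ak\<close>)
  next
    case False
    obtain \<psi>' where cv: "cvx \<psi>'" and tan: "\<forall>i\<in>A - {k}. \<forall>y. \<psi>' y \<ge> \<psi>' (x i) + g i * (y - x i)"
      and top: "\<forall>k'\<in>A - {k}. (\<forall>i\<in>A - {k}. x i \<le> x k' \<and> g i \<le> g k') \<longrightarrow>
                 (\<forall>y \<ge> x k'. \<psi>' y \<le> \<psi>' (x k') + g k' * (y - x k'))"
      using remove.IH[OF k(1)] by blast
    have monoA': "\<forall>i\<in>A-{k}. \<forall>j\<in>A-{k}. x i < x j \<longrightarrow> g i \<le> g j" using monoA by blast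
    obtain k' where k': "k' \<in> A - {k}" "\<forall>i\<in>A-{k}. x i \<le> x k' \<and> g i \<le> g k'"
      using top_exists[OF _ False monoA'] remove.hyps(1) by blast
    have topk': "\<forall>y \<ge> x k'. \<psi>' y \<le> \<psi>' (x k') + g k' * (y - x k')" using top k' by blast
    have tank': "\<psi>' y \<ge> \<psi>' (x k') + g k' * (y - x k')" for y using tan k' by blast
    have xkk': "x k' \<le> x k" "g k' \<le> g k" using k k' by auto
    define L where "L y = \<psi>' (x k) + g k * (y - x k)" for y
    define \<psi> where "\<psi> y = max (\<psi>' y) (L y)" for y
    have cvpsi: "cvx \<psi>" unfolding \<psi>_def L_def using cvx_max[OF cv cvx_affine] .
    have Lle: "L (x i) \<le> \<psi>' (x i)" if i: "i \<in> A - {k}" for i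
    proof -
      have 1: "\<psi>' (x k) \<le> \<psi>' (x k') + g k' * (x k - x k')" using topk' xkk' by blast
      have 2: "\<psi>' (x i) \<ge> \<psi>' (x k') + g k' * (x i - x k')" using tank' .
      have 3: "(g k - g k') * (x k - x i) \<ge> 0" using xkk' k i by (intro mult_nonneg_nonneg) auto
      show ?thesis unfolding L_def using 1 2 3 by (simp add: algebra_simps)
    qed
    have psixi: "\<psi> (x i) = \<psi>' (x i)" if "i \<in> A - {k}" for i
      using Lle[OF that] unfolding \<psi>_def by simp
    have psixk: "\<psi> (x k) = \<psi>' (x k)" unfolding \<psi>_def L_def by simp
    have tanA: "\<forall>i\<in>A. \<forall>y. \<psi> y \<ge> \<psi> (x i) + g i * (y - x i)"
    proof (intro ballI allI)
      fix i y assume i: "i \<in> A"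
      show "\<psi> y \<ge> \<psi> (x i) + g i * (y - x i)"
      proof (cases "i = k")
        case True then show ?thesis unfolding psixk by (simp add: \<psi>_def L_def)
      next
        case False
        then have i': "i \<in> A - {k}" using i by auto
        have "\<psi>' y \<ge> \<psi>' (x i) + g i * (y - x i)" using tan i' by blast
        then show ?thesis using psixi[OF i'] unfolding \<psi>_def by simp
      qed
    qed
    have topA: "\<forall>y \<ge> x k. \<psi> y \<le> \<psi> (x k) + g k * (y - x k)"
    proof (intro allI impI)
      fix y assume y: "y \<ge> x k"
      have 1: "\<psi>' y \<le> \<psi>' (x k') + g k' * (y - x k')" using topk' y xkk' by auto
      have 2: "\<psi>' (x k) \<ge> \<psi>' (x k') + g k' * (x k - x k')" using tank' .
      have 3: "(g k - g k') * (y - x k) \<ge> 0" using xkk' y by (intro mult_nonneg_nonneg) auto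
      have "\<psi>' y \<le> \<psi>' (x k) + g k * (y - x k)" using 1 2 3 by (simp add: algebra_simps)
      then show "\<psi> y \<le> \<psi> (x k) + g k * (y - x k)" unfolding psixk \<psi>_def L_def by simp
    qed
    show ?thesis
    proof (intro exI conjI)
      show "cvx \<psi>" by (rule cvpsi)
      show "\<forall>i\<in>A. \<forall>y. \<psi> y \<ge> \<psi> (x i) + g i * (y - x i)" by (rule tanA)
      show "\<forall>k2\<in>A. (\<forall>i\<in>A. x i \<le> x k2 \<and> g i \<le> g k2) \<longrightarrow> (\<forall>y \<ge> x k2. \<psi> y \<le> \<psi> (x k2) + g k2 * (y - x k2))"
        using tops topA by metis
    qed
  qed
qed


lemma strict_imp_convex_on: assumes "strict_convex_on S h" shows "convex_on S h"
proof (rule convex_onI)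
  show "convex S" using assms strict_convex_on_def by blast
  fix t :: real and x y assume t: "0 < t" "t < 1" and xy: "x \<in> S" "y \<in> S"
  show "h ((1 - t) *\<^sub>R x + t *\<^sub>R y) \<le> (1 - t) * h x + t * h y"
  proof (cases "x = y")
    case True then show ?thesis by (simp add: algebra_simps)
  next
    case False
    have "h ((1 - t) * x + t * y) < (1 - t) * h x + t * h y"
      using assms t xy False unfolding strict_convex_on_def by blast
    then show ?thesis by simp
  qed
qed

lemma deriv_strict_mono:
  assumes sc: "strict_convex_on {0<..} h" and dif: "\<forall>x>0. h differentiable (at x)"
    and ab: "0 < a" "a < b"
  shows "deriv h a < deriv h b"
proof -
  have cv: "convex_on {0<..} h" using strict_imp_convex_on[OF sc] .
  have con: "connected {0::real<..}" by (simp add: convex_connected)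
  have int: "interior {0::real<..} = {0<..}" by (simp add: interior_open)
  have "a > 0" using ab by auto
  then have "(h has_real_derivative deriv h a) (at a)" using dif DERIV_deriv_iff_real_differentiable by blast
  then have da: "(h has_field_derivative deriv h a) (at a within {0<..})"
    by (rule has_field_derivative_at_within)
  have "b > 0" using ab by auto
  then have "(h has_real_derivative deriv h b) (at b)" using dif DERIV_deriv_iff_real_differentiable by blast
  then have db: "(h has_field_derivative deriv h b) (at b within {0<..})"
    by (rule has_field_derivative_at_within)
  define c where "c = (a + b) / 2"
  have c: "a < c" "c < b" unfolding c_def using ab by auto
  have 1: "h c - h a \<ge> deriv h a * (c - a)"
    by (rule convex_on_imp_above_tangent[OF cv con]) (use ab c int da in auto)
  have 2: "h c - h b \<ge> deriv h b * (c - b)"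
    by (rule convex_on_imp_above_tangent[OF cv con]) (use ab c int db in auto)
  have sc': "h ((1 - t) * a + t * b) < (1 - t) * h a + t * h b" if "0 < t" "t < 1" for t
  proof -
    have "a \<in> {0<..}" "b \<in> {0<..}" "a \<noteq> b" using ab by auto
    then show ?thesis using sc that unfolding strict_convex_on_def by blast
  qed
  have "h ((1 - 1/2) * a + (1/2) * b) < (1 - 1/2) * h a + (1/2) * h b"
    by (rule sc') auto
  moreover have "(1 - 1/2) * a + (1/2) * b = c" unfolding c_def by simp
  ultimately have "h c < (1 - 1/2) * h a + (1/2) * h b" by simp
  then have 3: "2 * h c < h a + h b" by simp
  define w where "w = (b - a) / 2"
  have e1: "deriv h a * (c - a) = deriv h a * w" unfolding c_def w_def by (simp add: field_simps)
  have e2: "deriv h b * (c - b) = - (deriv h b * w)" unfolding c_def w_def by (simp add: field_simps)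
  have "deriv h a * w \<le> h c - h a" using 1 e1 by simp
  moreover have "- (deriv h b * w) \<le> h c - h b" using 2 e2 by simp
  ultimately have "deriv h a * w < deriv h b * w" using 3 by linarith
  then have "deriv h a * ((b - a) / 2) < deriv h b * ((b - a) / 2)" unfolding w_def .
  then show ?thesis using ab by (simp add: mult_less_cancel_right)
qed

lemma sum_gamma:
  assumes "j \<noteq> i" "i < n" "j < n"
  shows "(\<Sum>l<n. gamma j i l * f l) = f i - f j"
proof -
  have "(\<Sum>l<n. gamma j i l * f l) = (\<Sum>l<n. (if l = i then f l else 0) - (if l = j then f l else 0))"
    unfolding gamma_def using assms(1) by (intro sum.cong) auto
  also have "\<dots> = f i - f j" using assms by (simp add: sum_subtractf)
  finally show ?thesis .
qed

lemma dir2: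
  assumes Pstar: "Pstar \<in> pos_simplex n" and m0: "\<forall>j. m 0 j = 1"
    and P0: "P0 \<in> cond_manifold n k m M \<inter> pos_simplex n"
    and sc: "strict_convex_on {0<..} h" and dif: "\<forall>x>0. h differentiable (at x)"
    and minim: "\<forall>P \<in> cond_manifold n k m M \<inter> pos_simplex n. fdiv n h P0 Pstar \<le> fdiv n h P Pstar"
  shows "(\<lambda>q. (\<lambda>l. P0 l + q l)) ` Qcone n P0 Pstar \<inter> cond_manifold n k m M = {P0}"
proof -
  have ps_pos: "\<forall>i<n. Pstar i > 0" and ps_sum: "(\<Sum>i<n. Pstar i) = 1"
    using Pstar unfolding pos_simplex_def by auto
  have p0pos: "\<forall>i<n. P0 i > 0" and p0z: "\<forall>i\<ge>n. P0 i = 0" and p0sum: "(\<Sum>i<n. P0 i) = 1"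
    and p0L: "\<forall>r\<le>k. (\<Sum>j<n. m r j * P0 j) = M r"
    using P0 unfolding pos_simplex_def cond_manifold_def by auto
  have n0: "n > 0" using ps_sum by (cases n) auto
  define x where "x l = P0 l / Pstar l" for l
  have xpos: "x l > 0" if "l < n" for l using ps_pos p0pos that x_def by simp
  define hd where "hd l = deriv h (x l)" for l
  have hdmono: "hd i < hd j" if "i < n" "j < n" "x i < x j" for i j
    unfolding hd_def using deriv_strict_mono[OF sc dif xpos[OF that(1)] that(3)] .
  have gen_neg: "(\<Sum>l<n. v l * hd l) \<le> 0 \<and> (v \<noteq> (\<lambda>l. 0) \<longrightarrow> (\<Sum>l<n. v l * hd l) < 0)"
    if v: "v \<in> Q_gens n P0 Pstar" for v
  proof -
    obtain j i where ji: "j < i" "i < n" and vdef: "v = (\<lambda>l. sgn (x j - x i) * gamma j i l)"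
      using v unfolding Q_gens_def x_def by blast
    have S: "(\<Sum>l<n. v l * hd l) = sgn (x j - x i) * (hd i - hd j)"
    proof -
      have "(\<Sum>l<n. v l * hd l) = sgn (x j - x i) * (\<Sum>l<n. gamma j i l * hd l)"
        unfolding vdef by (simp add: sum_distrib_left mult.assoc)
      also have "(\<Sum>l<n. gamma j i l * hd l) = hd i - hd j" using ji by (intro sum_gamma) auto
      finally show ?thesis .
    qed
    consider "x j > x i" | "x j < x i" | "x j = x i" by linarith
    then show ?thesis
    proof cases
      case 1
      have "hd i < hd j" using hdmono ji 1 by auto
      then show ?thesis using S 1 by simp
    next
      case 2
      have "hd j < hd i" using hdmono ji 2 by auto
      then show ?thesis using S 2 by simp
    next
      case 3
      then have "v = (\<lambda>l. 0)" unfolding vdef by simp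
      then show ?thesis by simp
    qed
  qed
  show ?thesis
  proof (intro equalityI subsetI)
    fix z assume "z \<in> {P0}"
    then have z: "z = P0" by simp
    have "(\<lambda>l. 0) \<in> Qcone n P0 Pstar" unfolding Qcone_def nonneg_cone_def
      by (intro CollectI exI[of _ "{}"]) auto
    then have "z \<in> (\<lambda>q. (\<lambda>l. P0 l + q l)) ` Qcone n P0 Pstar"
      by (rule rev_image_eqI) (simp add: z)
    moreover have "z \<in> cond_manifold n k m M" using P0 z by simp
    ultimately show "z \<in> (\<lambda>q. (\<lambda>l. P0 l + q l)) ` Qcone n P0 Pstar \<inter> cond_manifold n k m M"
      by (rule IntI)
  next
    fix z assume zz: "z \<in> (\<lambda>q. (\<lambda>l. P0 l + q l)) ` Qcone n P0 Pstar \<inter> cond_manifold n k m M"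
    then obtain q where qQ: "q \<in> Qcone n P0 Pstar" and zq: "z = (\<lambda>l. P0 l + q l)" by blast
    have zL: "z \<in> cond_manifold n k m M" using zz by blast
    obtain F c where finF: "finite F" and FQ: "F \<subseteq> Q_gens n P0 Pstar" and c0: "\<forall>v\<in>F. c v \<ge> 0"
      and qdef: "q = (\<lambda>l. \<Sum>v\<in>F. c v * v l)"
      using qQ unfolding Qcone_def nonneg_cone_def by blast
    show "z \<in> {P0}"
    proof (rule ccontr)
      assume "z \<notin> {P0}"
      then obtain l0 where l0: "q l0 \<noteq> 0" using zq by fastforce
      then obtain v0 where v0: "v0 \<in> F" "c v0 * v0 l0 \<noteq> 0" unfolding qdef
        by (metis (mono_tags, lifting) sum.neutral)
      have v0nz: "v0 \<noteq> (\<lambda>l. 0)" using v0 by auto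
      have cv0: "c v0 > 0" using v0 c0 by (metis less_eq_real_def mult_eq_0_iff)
      define S where "S v = (\<Sum>l<n. v l * hd l)" for v :: "nat \<Rightarrow> real"
      define Dv where "Dv = (\<Sum>l<n. q l * hd l)"
      have "Dv = (\<Sum>l<n. \<Sum>v\<in>F. c v * (v l * hd l))"
        unfolding Dv_def qdef by (simp add: sum_distrib_right mult.assoc)
      also have "\<dots> = (\<Sum>v\<in>F. c v * S v)"
        unfolding S_def by (subst sum.swap) (simp add: sum_distrib_left)
      finally have Dv_eq: "Dv = (\<Sum>v\<in>F. c v * S v)" .
      have "(\<Sum>v\<in>F. c v * S v) < (\<Sum>v\<in>F. 0)"
      proof (rule sum_strict_mono_ex1[OF finF])
        show "\<forall>v\<in>F. c v * S v \<le> 0" using c0 gen_neg FQ unfolding S_def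
          by (meson mult_nonneg_nonpos subsetD)
        show "\<exists>v\<in>F. c v * S v < 0" using v0 cv0 gen_neg[of v0] FQ v0nz unfolding S_def
          by (meson mult_pos_neg subsetD)
      qed
      then have Dneg: "Dv < 0" using Dv_eq by simp
      have qz: "q l = 0" if "l \<ge> n" for l
        using zL p0z that unfolding cond_manifold_def zq by auto
      have mq: "(\<Sum>l<n. m r l * q l) = 0" if "r \<le> k" for r
      proof -
        have "(\<Sum>l<n. m r l * z l) = M r" using zL that unfolding cond_manifold_def by auto
        then have "(\<Sum>l<n. m r l * P0 l) + (\<Sum>l<n. m r l * q l) = M r"
          unfolding zq by (simp add: distrib_left sum.distrib)
        then show ?thesis using p0L that by simp
      qed
      define \<phi> where "\<phi> t = fdiv n h (\<lambda>l. P0 l + t * q l) Pstar" for t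
      have der: "(\<phi> has_real_derivative (\<Sum>l<n. Pstar l * (hd l * (q l / Pstar l)))) (at 0)"
        unfolding \<phi>_def fdiv_def
      proof (rule DERIV_sum)
        fix l assume l: "l \<in> {..<n}"
        have "(h has_real_derivative hd l) (at (x l))"
          unfolding hd_def using dif xpos l DERIV_deriv_iff_real_differentiable by auto
        then have h1: "(h has_real_derivative hd l) (at ((\<lambda>t. (P0 l + t * q l) / Pstar l) 0))"
          by (simp add: x_def)
        have h2: "((\<lambda>t. (P0 l + t * q l) / Pstar l) has_real_derivative q l / Pstar l) (at 0)"
          using ps_pos l by (auto intro!: derivative_eq_intros)
        show "((\<lambda>t. Pstar l * h ((P0 l + t * q l) / Pstar l)) has_real_derivative Pstar l * (hd l * (q l / Pstar l))) (at 0)"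
          by (rule DERIV_cmult, rule DERIV_chain2[OF h1 h2])
      qed
      have "(\<Sum>l<n. Pstar l * (hd l * (q l / Pstar l))) = Dv"
        unfolding Dv_def using ps_pos by (intro sum.cong) auto
      then have der': "(\<phi> has_real_derivative Dv) (at 0)" using der by simp
      obtain d where d: "d > 0" "\<forall>t>0. t < d \<longrightarrow> \<phi> 0 > \<phi> (0 + t)"
        using DERIV_neg_dec_right[OF der' Dneg] by blast
      define \<mu> where "\<mu> = Min ((\<lambda>l. P0 l / (\<bar>q l\<bar> + 1)) ` {..<n})"
      have mu_le: "\<mu> \<le> P0 l / (\<bar>q l\<bar> + 1)" if "l < n" for l
        unfolding \<mu>_def using that by simp
      have mu_pos: "\<mu> > 0" unfolding \<mu>_def using n0 p0pos
        by (subst Min_gr_iff) auto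
      define t where "t = min (d / 2) \<mu>"
      have t: "t > 0" "t < d" "t \<le> \<mu>" unfolding t_def using d mu_pos by auto
      define Pt where "Pt = (\<lambda>l. P0 l + t * q l)"
      have Ptpos: "Pt l > 0" if l: "l < n" for l
      proof -
        have "t \<le> P0 l / (\<bar>q l\<bar> + 1)" using mu_le[OF l] t by linarith
        then have 1: "t * (\<bar>q l\<bar> + 1) \<le> P0 l"
          by (simp add: pos_le_divide_eq add_pos_nonneg)
        have 2: "- (t * \<bar>q l\<bar>) \<le> t * q l" using t(1)
          by (cases "q l \<ge> 0") (auto simp: mult_nonneg_nonneg)
        have 3: "t * (\<bar>q l\<bar> + 1) = t * \<bar>q l\<bar> + t" by (simp add: algebra_simps)
        show ?thesis unfolding Pt_def using 1 2 3 t(1) by linarith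
      qed
      have PtL: "(\<Sum>j<n. m r j * Pt j) = M r" if "r \<le> k" for r
      proof -
        have "(\<Sum>j<n. m r j * Pt j) = (\<Sum>j<n. m r j * P0 j) + t * (\<Sum>j<n. m r j * q j)"
          unfolding Pt_def by (simp add: algebra_simps sum.distrib sum_distrib_left)
        then show ?thesis using p0L mq that by simp
      qed
      have M0: "M 0 = 1" using p0L m0 p0sum by auto
      have Ptsum: "(\<Sum>j<n. Pt j) = 1" using PtL[of 0] m0 M0 by simp
      have PtS: "Pt \<in> cond_manifold n k m M \<inter> pos_simplex n"
        unfolding cond_manifold_def pos_simplex_def using Ptpos PtL Ptsum p0z qz
        by (auto simp: Pt_def)
      have "\<phi> t < \<phi> 0" using d t by auto
      moreover have "\<phi> 0 = fdiv n h P0 Pstar" unfolding \<phi>_def by simp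
      moreover have "\<phi> t = fdiv n h Pt Pstar" unfolding \<phi>_def Pt_def ..
      moreover have "fdiv n h P0 Pstar \<le> fdiv n h Pt Pstar" using minim PtS by blast
      ultimately show False by linarith
    qed
  qed
qed


lemma dir1:
  assumes Pstar: "Pstar \<in> pos_simplex n"
    and P0: "P0 \<in> cond_manifold n k m M \<inter> pos_simplex n"
    and hyp: "(\<lambda>q. (\<lambda>l. P0 l + q l)) ` Qcone n P0 Pstar \<inter> cond_manifold n k m M = {P0}"
  shows "\<exists>h. strict_convex_on {0<..} h \<and>
             (\<forall>P \<in> cond_manifold n k m M \<inter> pos_simplex n. fdiv n h P0 Pstar \<le> fdiv n h P Pstar)"
proof -
  have ps_pos: "\<forall>i<n. Pstar i > 0"
    using Pstar unfolding pos_simplex_def by auto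
  have p0pos: "\<forall>i<n. P0 i > 0" and p0z: "\<forall>i\<ge>n. P0 i = 0"
    and p0L: "\<forall>r\<le>k. (\<Sum>j<n. m r j * P0 j) = M r"
    using P0 unfolding pos_simplex_def cond_manifold_def by auto
  define x where "x l = P0 l / Pstar l" for l
  define E where "E = {e \<in> {..<n} \<times> {..<n}. x (fst e) < x (snd e)}"
  have finE: "finite E" unfolding E_def by (rule finite_subset[of _ "{..<n} \<times> {..<n}"]) auto
  have Ene: "fst e \<noteq> snd e" "fst e < n" "snd e < n" "x (fst e) < x (snd e)" if "e \<in> E" for e
    using that unfolding E_def by auto
  define vec where "vec e = (\<lambda>r. m r (fst e) - m r (snd e))" for e :: "nat \<times> nat"
  define A where "A = vec ` E"
  have finA: "finite A" unfolding A_def using finE by simp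
  define gen where "gen e = (\<lambda>l. if l = snd e then -1 else if l = fst e then 1 else (0::real))" for e :: "nat \<times> nat"
  have sum_gen: "(\<Sum>l<n. f l * gen e l) = f (fst e) - f (snd e)" if e: "e \<in> E" for e f
  proof -
    have "(\<Sum>l<n. f l * gen e l) = (\<Sum>l<n. (if l = fst e then f l else 0) - (if l = snd e then f l else 0))"
      unfolding gen_def using Ene[OF e] by (intro sum.cong) auto
    also have "\<dots> = f (fst e) - f (snd e)" using Ene[OF e] by (simp add: sum_subtractf)
    finally show ?thesis .
  qed
  have no2: "\<not> (\<exists>c. (\<forall>a\<in>A. 0 \<le> c a) \<and> (\<Sum>a\<in>A. c a) = 1 \<and> (\<forall>r<Suc k. (\<Sum>a\<in>A. c a * a r) = 0))"
  proof
    assume "\<exists>c. (\<forall>a\<in>A. 0 \<le> c a) \<and> (\<Sum>a\<in>A. c a) = 1 \<and> (\<forall>r<Suc k. (\<Sum>a\<in>A. c a * a r) = 0)"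
    then obtain c where c0: "\<forall>a\<in>A. 0 \<le> c a" and c1: "(\<Sum>a\<in>A. c a) = 1"
      and cz: "\<forall>r<Suc k. (\<Sum>a\<in>A. c a * a r) = 0" by blast
    define rep where "rep a = (SOME e. e \<in> E \<and> vec e = a)" for a
    have repE: "rep a \<in> E \<and> vec (rep a) = a" if "a \<in> A" for a
      unfolding rep_def using that A_def by (metis (mono_tags, lifting) imageE someI_ex)
    define D where "D a = gen (rep a)" for a
    have injD: "inj_on D A"
    proof (rule inj_onI)
      fix a b assume a: "a \<in> A" and b: "b \<in> A" and Dab: "D a = D b"
      have e1: "rep a \<in> E" and e2: "rep b \<in> E" using repE a b by auto
      have "gen (rep a) (fst (rep a)) = gen (rep b) (fst (rep a))"
        "gen (rep a) (snd (rep a)) = gen (rep b) (snd (rep a))" using Dab D_def by auto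
      then have "fst (rep a) = fst (rep b)" "snd (rep a) = snd (rep b)"
        using Ene[OF e1] Ene[OF e2] unfolding gen_def by (auto split: if_splits)
      then have "rep a = rep b" by (simp add: prod_eq_iff)
      then show "a = b" using repE a b by metis
    qed
    define q where "q = (\<lambda>l. \<Sum>a\<in>A. c a * D a l)"
    have DQ: "D a \<in> Q_gens n P0 Pstar" if a: "a \<in> A" for a
    proof -
      define i where "i = fst (rep a)"
      define j where "j = snd (rep a)"
      have e: "rep a \<in> E" using repE a by auto
      have ij: "i \<noteq> j" "i < n" "j < n" "x i < x j" using Ene[OF e] i_def j_def by auto
      show ?thesis
      proof (cases "j < i")
        case True
        have s: "sgn (P0 j / Pstar j - P0 i / Pstar i) = 1" using ij unfolding x_def by simp
        have "D a = gamma j i" by (simp add: D_def gen_def gamma_def i_def j_def)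
        then have eq: "D a = (\<lambda>l. sgn (P0 j / Pstar j - P0 i / Pstar i) * gamma j i l)"
          using s by simp
        have "\<exists>j' i'. D a = (\<lambda>l. sgn (P0 j' / Pstar j' - P0 i' / Pstar i') * gamma j' i' l) \<and> j' < i' \<and> i' < n"
          by (rule exI[of _ j], rule exI[of _ i]) (use eq True ij in simp)
        then show ?thesis unfolding Q_gens_def mem_Collect_eq .
      next
        case False
        then have ij2: "i < j" using ij by auto
        have s: "sgn (P0 i / Pstar i - P0 j / Pstar j) = -1" using ij unfolding x_def by simp
        have "D a = (\<lambda>l. - gamma i j l)"
        proof
          fix l show "D a l = - gamma i j l"
            using ij(1) by (simp add: D_def gen_def gamma_def flip: i_def j_def)
        qed
        then have eq: "D a = (\<lambda>l. sgn (P0 i / Pstar i - P0 j / Pstar j) * gamma i j l)"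
          using s by simp
        have "\<exists>j' i'. D a = (\<lambda>l. sgn (P0 j' / Pstar j' - P0 i' / Pstar i') * gamma j' i' l) \<and> j' < i' \<and> i' < n"
          by (rule exI[of _ i], rule exI[of _ j]) (use eq ij2 ij in simp)
        then show ?thesis unfolding Q_gens_def mem_Collect_eq .
      qed
    qed
    have qQ: "q \<in> Qcone n P0 Pstar"
      unfolding Qcone_def nonneg_cone_def
    proof (intro CollectI exI conjI)
      show "finite (D ` A)" using finA by simp
      show "D ` A \<subseteq> Q_gens n P0 Pstar" using DQ by auto
      show "\<forall>v\<in>D ` A. 0 \<le> c (the_inv_into A D v)"
        using c0 injD by (auto simp: the_inv_into_f_f)
      show "q = (\<lambda>l. \<Sum>v\<in>D ` A. c (the_inv_into A D v) * v l)"
        unfolding q_def by (auto simp: sum.reindex[OF injD] the_inv_into_f_f[OF injD] fun_eq_iff)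
    qed
    have Dz: "D a l = 0" if "a \<in> A" "l \<ge> n" for a l
    proof -
      have rE: "rep a \<in> E" using repE[OF that(1)] by simp
      then have "l \<noteq> fst (rep a)" "l \<noteq> snd (rep a)" using Ene(2,3)[OF rE] that(2) by auto
      then show ?thesis by (simp add: D_def gen_def)
    qed
    have mq: "(\<Sum>l<n. m r l * q l) = 0" if r: "r \<le> k" for r
    proof -
      have "(\<Sum>l<n. m r l * q l) = (\<Sum>l<n. \<Sum>a\<in>A. c a * (m r l * D a l))"
        unfolding q_def by (simp add: sum_distrib_left mult.left_commute)
      also have "\<dots> = (\<Sum>a\<in>A. \<Sum>l<n. c a * (m r l * D a l))" by (rule sum.swap)
      also have "\<dots> = (\<Sum>a\<in>A. c a * (\<Sum>l<n. m r l * D a l))" by (simp add: sum_distrib_left)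
      also have "\<dots> = (\<Sum>a\<in>A. c a * a r)"
      proof (intro sum.cong refl)
        fix a assume a: "a \<in> A"
        have "(\<Sum>l<n. m r l * D a l) = m r (fst (rep a)) - m r (snd (rep a))"
          unfolding D_def using sum_gen repE a by blast
        also have "\<dots> = a r" using fun_cong[OF conjunct2[OF repE[OF a]], of r] unfolding vec_def by simp
        finally show "c a * (\<Sum>l<n. m r l * D a l) = c a * a r" by simp
      qed
      also have "\<dots> = 0" using cz r by simp
      finally show ?thesis .
    qed
    have inL: "(\<lambda>l. P0 l + q l) \<in> cond_manifold n k m M"
      unfolding cond_manifold_def
    proof (intro CollectI conjI allI impI)
      fix l assume "n \<le> l" then show "P0 l + q l = 0" using p0z Dz unfolding q_def by simp
    next
      fix r assume r: "r \<le> k"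
      have "(\<Sum>j<n. m r j * (P0 j + q j)) = (\<Sum>j<n. m r j * P0 j) + (\<Sum>j<n. m r j * q j)"
        by (simp add: distrib_left sum.distrib)
      then show "(\<Sum>j<n. m r j * (P0 j + q j)) = M r" using p0L mq r by simp
    qed
    have "(\<lambda>l. P0 l + q l) \<in> (\<lambda>q. (\<lambda>l. P0 l + q l)) ` Qcone n P0 Pstar" using qQ by blast
    then have "(\<lambda>l. P0 l + q l) \<in> {P0}" using inL hyp by blast
    then have q0: "q l = 0" for l by (auto simp: fun_eq_iff)
    have "(\<Sum>l<n. x l * q l) = (\<Sum>l<n. \<Sum>a\<in>A. c a * (x l * D a l))"
      unfolding q_def by (simp add: sum_distrib_left mult.left_commute)
    also have "\<dots> = (\<Sum>a\<in>A. \<Sum>l<n. c a * (x l * D a l))" by (rule sum.swap)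
    also have "\<dots> = (\<Sum>a\<in>A. c a * (\<Sum>l<n. x l * D a l))" by (simp add: sum_distrib_left)
    also have "\<dots> = (\<Sum>a\<in>A. c a * (x (fst (rep a)) - x (snd (rep a))))"
      unfolding D_def using sum_gen repE by (intro sum.cong refl) auto
    also have "\<dots> < (\<Sum>a\<in>A. 0)"
    proof (rule sum_strict_mono_ex1[OF finA])
      show "\<forall>a\<in>A. c a * (x (fst (rep a)) - x (snd (rep a))) \<le> 0"
        using c0 repE Ene by (meson diff_less_0_iff_less less_imp_le mult_nonneg_nonpos)
      obtain a0 where a0: "a0 \<in> A" "c a0 > 0"
      proof (rule ccontr)
        assume "\<not> thesis"
        then have "\<forall>a\<in>A. c a \<le> 0" using that by force
        then have "(\<Sum>a\<in>A. c a) \<le> 0" by (simp add: sum_nonpos)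
        then show False using c1 by simp
      qed
      have "x (fst (rep a0)) - x (snd (rep a0)) < 0" using repE[OF a0(1)] Ene by auto
      then show "\<exists>a\<in>A. c a * (x (fst (rep a)) - x (snd (rep a))) < 0"
        using a0 by (meson mult_pos_neg)
    qed
    finally show False using q0 by simp
  qed
  obtain y where y: "\<forall>a\<in>A. (\<Sum>r<Suc k. a r * y r) < 0"
    using gordan[OF finA, of "Suc k"] no2 by blast
  define g where "g l = (\<Sum>r<Suc k. y r * m r l)" for l
  have gE: "g (fst e) < g (snd e)" if e: "e \<in> E" for e
  proof -
    have "vec e \<in> A" unfolding A_def using e by simp
    then have "(\<Sum>r<Suc k. vec e r * y r) < 0" using y by blast
    moreover have "(\<Sum>r<Suc k. vec e r * y r) = g (fst e) - g (snd e)"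
      unfolding vec_def g_def by (simp add: algebra_simps sum_subtractf)
    ultimately show ?thesis by simp
  qed
  define R where "R = (\<lambda>e. (g (snd e) - g (fst e)) / (x (snd e) - x (fst e))) ` E"
  have finR: "finite R" unfolding R_def using finE by simp
  define \<epsilon> where "\<epsilon> = Min (insert 1 R) / 2"
  have Rpos: "\<forall>r\<in>R. r > 0" unfolding R_def using gE Ene by (auto intro!: divide_pos_pos)
  have eps_pos: "\<epsilon> > 0" unfolding \<epsilon>_def using finR Rpos by (simp add: Min_gr_iff)
  have epsE: "2 * \<epsilon> * (x (snd e) - x (fst e)) \<le> g (snd e) - g (fst e)" if e: "e \<in> E" for e
  proof -
    have "(g (snd e) - g (fst e)) / (x (snd e) - x (fst e)) \<in> R" unfolding R_def using e by blast
    then have "Min (insert 1 R) \<le> (g (snd e) - g (fst e)) / (x (snd e) - x (fst e))"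
      using finR by simp
    then have "2 * \<epsilon> \<le> (g (snd e) - g (fst e)) / (x (snd e) - x (fst e))" unfolding \<epsilon>_def by simp
    then show ?thesis using Ene[OF e] by (simp add: pos_le_divide_eq)
  qed
  define g' where "g' l = g l - 2 * \<epsilon> * x l" for l
  have mono: "\<forall>i\<in>{..<n}. \<forall>j\<in>{..<n}. x i < x j \<longrightarrow> g' i \<le> g' j"
  proof (intro ballI impI)
    fix i j assume ij: "i \<in> {..<n}" "j \<in> {..<n}" "x i < x j"
    then have "(i, j) \<in> E" unfolding E_def by auto
    from epsE[OF this] show "g' i \<le> g' j" unfolding g'_def by (simp add: algebra_simps)
  qed
  obtain \<psi> where cv: "cvx \<psi>" and tan: "\<forall>i\<in>{..<n}. \<forall>y. \<psi> y \<ge> \<psi> (x i) + g' i * (y - x i)"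
    using interp_strong[OF _ mono] by blast
  define h where "h y = \<psi> y + \<epsilon> * y\<^sup>2" for y
  have sc: "strict_convex_on {0<..} h"
    unfolding strict_convex_on_def
  proof (intro conjI ballI allI impI)
    show "convex {0::real<..}" by simp
    fix a b t :: real assume ab: "a \<in> {0<..}" "b \<in> {0<..}" and t: "a \<noteq> b \<and> 0 < t \<and> t < 1"
    have 1: "\<psi> ((1 - t) * a + t * b) \<le> (1 - t) * \<psi> a + t * \<psi> b" using cv t unfolding cvx_def by auto
    have key: "(1 - t) * a\<^sup>2 + t * b\<^sup>2 - ((1 - t) * a + t * b)\<^sup>2 = t * (1 - t) * (a - b)\<^sup>2"
      by (simp add: algebra_simps power2_eq_square)
    have "t * (1 - t) * (a - b)\<^sup>2 > 0" using t by auto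
    then have "((1 - t) * a + t * b)\<^sup>2 < (1 - t) * a\<^sup>2 + t * b\<^sup>2" using key by linarith
    then have 2: "\<epsilon> * ((1 - t) * a + t * b)\<^sup>2 < \<epsilon> * ((1 - t) * a\<^sup>2 + t * b\<^sup>2)"
      using eps_pos by (simp add: mult_less_cancel_left_pos)
    have 3: "(1 - t) * h a + t * h b = (1 - t) * \<psi> a + t * \<psi> b + \<epsilon> * ((1 - t) * a\<^sup>2 + t * b\<^sup>2)"
      unfolding h_def by (simp add: algebra_simps)
    show "h ((1 - t) * a + t * b) < (1 - t) * h a + t * h b"
      unfolding 3 unfolding h_def using 1 2 by linarith
  qed
  have htan: "h z \<ge> h (x i) + g i * (z - x i)" if i: "i < n" for i z
  proof -
    have 1: "\<psi> z \<ge> \<psi> (x i) + g' i * (z - x i)" using tan i by blast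
    have 2: "g' i * (z - x i) = g i * (z - x i) - 2 * \<epsilon> * x i * (z - x i)"
      unfolding g'_def by (simp add: algebra_simps)
    have 3: "\<epsilon> * z\<^sup>2 - \<epsilon> * (x i)\<^sup>2 - 2 * \<epsilon> * x i * (z - x i) = \<epsilon> * (z - x i)\<^sup>2"
      by (simp add: algebra_simps power2_eq_square)
    have 4: "\<epsilon> * (z - x i)\<^sup>2 \<ge> 0" using eps_pos by simp
    show ?thesis unfolding h_def using 1 2 3 4 by linarith
  qed
  have minim: "fdiv n h P0 Pstar \<le> fdiv n h P Pstar"
    if P: "P \<in> cond_manifold n k m M \<inter> pos_simplex n" for P
  proof -
    have PL: "\<forall>r\<le>k. (\<Sum>j<n. m r j * P j) = M r" using P unfolding cond_manifold_def by auto
    have "fdiv n h P Pstar \<ge> (\<Sum>i<n. Pstar i * (h (x i) + g i * (P i / Pstar i - x i)))"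
      unfolding fdiv_def
      by (intro sum_mono mult_left_mono htan) (use ps_pos in \<open>auto simp: less_imp_le\<close>)
    also have "(\<Sum>i<n. Pstar i * (h (x i) + g i * (P i / Pstar i - x i)))
        = (\<Sum>i<n. Pstar i * h (x i)) + (\<Sum>i<n. g i * (P i - P0 i))"
      unfolding sum.distrib[symmetric]
      by (intro sum.cong refl) (use ps_pos in \<open>auto simp: x_def field_simps\<close>)
    also have "(\<Sum>i<n. g i * (P i - P0 i)) = (\<Sum>i<n. \<Sum>r<Suc k. y r * (m r i * (P i - P0 i)))"
      unfolding g_def by (simp only: sum_distrib_right mult.assoc)
    also have "\<dots> = (\<Sum>r<Suc k. \<Sum>i<n. y r * (m r i * (P i - P0 i)))" by (rule sum.swap)
    also have "\<dots> = (\<Sum>r<Suc k. y r * (\<Sum>i<n. m r i * (P i - P0 i)))" by (simp add: sum_distrib_left)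
    also have "\<dots> = 0"
    proof (intro sum.neutral ballI)
      fix r assume "r \<in> {..<Suc k}"
      then have r: "r \<le> k" by simp
      have "(\<Sum>i<n. m r i * (P i - P0 i)) = (\<Sum>i<n. m r i * P i) - (\<Sum>i<n. m r i * P0 i)"
        by (simp add: right_diff_distrib sum_subtractf)
      then show "y r * (\<Sum>i<n. m r i * (P i - P0 i)) = 0" using PL p0L r by simp
    qed
    also have "(\<Sum>i<n. Pstar i * h (x i)) = fdiv n h P0 Pstar" unfolding fdiv_def x_def ..
    finally show ?thesis by simp
  qed
  show ?thesis using sc minim by blast
qed


theorem mainTheorem4:
  fixes n k :: nat and Pstar :: "nat \<Rightarrow> real"
    and m :: "nat \<Rightarrow> nat \<Rightarrow> real" and M :: "nat \<Rightarrow> real"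
  assumes n2: "n \<ge> 2"
    and Pstar: "Pstar \<in> pos_simplex n"
    and m0: "\<forall>j. m 0 j = 1"
    and M0: "M 0 = 1"
    and Lne: "cond_manifold n k m M \<inter> pos_simplex n \<noteq> {}"
  shows
    "(\<forall>P0 \<in> cond_manifold n k m M \<inter> pos_simplex n.
        (\<lambda>q. (\<lambda>l. P0 l + q l)) ` Qcone n P0 Pstar \<inter> cond_manifold n k m M = {P0} \<longrightarrow>
        (\<exists>h. strict_convex_on {0<..} h \<and>
             (\<forall>P \<in> cond_manifold n k m M \<inter> pos_simplex n. fdiv n h P0 Pstar \<le> fdiv n h P Pstar)))
   \<and>
    (\<forall>P0 \<in> cond_manifold n k m M \<inter> pos_simplex n. \<forall>h.
        strict_convex_on {0<..} h \<and> (\<forall>x>0. h differentiable (at x)) \<and>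
        (\<forall>P \<in> cond_manifold n k m M \<inter> pos_simplex n. fdiv n h P0 Pstar \<le> fdiv n h P Pstar) \<longrightarrow>
        (\<lambda>q. (\<lambda>l. P0 l + q l)) ` Qcone n P0 Pstar \<inter> cond_manifold n k m M = {P0})"
proof (intro conjI ballI allI impI)
  fix P0 assume P0: "P0 \<in> cond_manifold n k m M \<inter> pos_simplex n"
    and hyp: "(\<lambda>q. (\<lambda>l. P0 l + q l)) ` Qcone n P0 Pstar \<inter> cond_manifold n k m M = {P0}"
  show "\<exists>h. strict_convex_on {0<..} h \<and>
             (\<forall>P \<in> cond_manifold n k m M \<inter> pos_simplex n. fdiv n h P0 Pstar \<le> fdiv n h P Pstar)"
    by (rule dir1[OF Pstar P0 hyp])
next
  fix P0 h assume P0: "P0 \<in> cond_manifold n k m M \<inter> pos_simplex n"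
    and H: "strict_convex_on {0<..} h \<and> (\<forall>x>0. h differentiable (at x)) \<and>
        (\<forall>P \<in> cond_manifold n k m M \<inter> pos_simplex n. fdiv n h P0 Pstar \<le> fdiv n h P Pstar)"
  show "(\<lambda>q. (\<lambda>l. P0 l + q l)) ` Qcone n P0 Pstar \<inter> cond_manifold n k m M = {P0}"
    using dir2[OF Pstar m0 P0] H by blast
qed

end
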